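(* Let $k$ be a commutative ring and $H$ a Hopf algebra over $k$ that is finitely generated projective as a $k$-module. If $H$ is a separable $k$-algebra, then $H$ is an FH-algebra.
   Context: $H$ is an FH-algebra if it is a Frobenius $k$-algebra admitting a Frobenius homomorphism $H\to k$ that is a left integral in $H^*$, i.e. lies in $\int^\ell_{H^*}=\{f\in H^*: gf=g(1_H)f\ \forall g\in H^*\}$ (product in $H^*$ is convolution). *)

theory Defs
  imports Main HOL.Modules "HOL-Library.Function_Algebras"
begin

text \<open>Throughout: k is a commutative ring (type 'k :: comm_ring_1), and H is a
 k-module given by an abelian group type 'h with scalar multiplication
 smult :: 'k => 'h => 'h (assumed to satisfy the library locale module).\<close>

definition lin_fun :: "('k::comm_ring_1 \<Rightarrow> 'h::ab_group_add \<Rightarrow> 'h) \<Rightarrow> ('h \<Rightarrow> 'k) \<Rightarrow> bool" where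
  "lin_fun smult f \<longleftrightarrow> (\<forall>x y. f (x + y) = f x + f y) \<and> (\<forall>c x. f (smult c x) = c * f x)"

definition lin_map :: "('k::comm_ring_1 \<Rightarrow> 'h::ab_group_add \<Rightarrow> 'h) \<Rightarrow> ('h \<Rightarrow> 'h) \<Rightarrow> bool" where
  "lin_map smult f \<longleftrightarrow> (\<forall>x y. f (x + y) = f x + f y) \<and> (\<forall>c x. f (smult c x) = smult c (f x))"

text \<open>Finitely generated projective: H is a direct summand (retract) of a finitely
 generated free module k^n (modelled as functions nat => k vanishing from n on).\<close>
definition fg_projective :: "('k::comm_ring_1 \<Rightarrow> 'h::ab_group_add \<Rightarrow> 'h) \<Rightarrow> bool" where
  "fg_projective smult \<longleftrightarrow>
    (\<exists>(n::nat) (i :: 'h \<Rightarrow> nat \<Rightarrow> 'k) (p :: (nat \<Rightarrow> 'k) \<Rightarrow> 'h).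
       (\<forall>x y. i (x + y) = i x + i y) \<and> (\<forall>c x. i (smult c x) = (\<lambda>j. c * i x j)) \<and>
       (\<forall>x j. n \<le> j \<longrightarrow> i x j = 0) \<and>
       (\<forall>u v. p (u + v) = p u + p v) \<and> (\<forall>c u. p (\<lambda>j. c * u j) = smult c (p u)) \<and>
       (\<forall>x. p (i x) = x))"

text \<open>An element of H\<otimes>...\<otimes>H (n factors) is represented by a finite formal sum of
 simple tensors, i.e. a list of lists of length n.  Two representatives are equal in the
 tensor product iff the difference of the corresponding elements of the free k-module on
 'h list lies in the k-submodule spanned by the multilinearity relations.\<close>

definition tdelta :: "'h list \<Rightarrow> 'h list \<Rightarrow> 'k::comm_ring_1" where
  "tdelta t = (\<lambda>q. if q = t then 1 else 0)"

definition fscale :: "'k::comm_ring_1 \<Rightarrow> ('h list \<Rightarrow> 'k) \<Rightarrow> ('h list \<Rightarrow> 'k)" where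
  "fscale c f = (\<lambda>q. c * f q)"

definition frep :: "'h list list \<Rightarrow> 'h list \<Rightarrow> 'k::comm_ring_1" where
  "frep xs = (\<lambda>q. of_nat (count_list xs q))"

definition tens_rel :: "('k::comm_ring_1 \<Rightarrow> 'h::ab_group_add \<Rightarrow> 'h) \<Rightarrow> nat \<Rightarrow> ('h list \<Rightarrow> 'k) set" where
  "tens_rel smult n =
     {tdelta (l @ [a + a'] @ r) - tdelta (l @ [a] @ r) - tdelta (l @ [a'] @ r) | l r a a'.
        length l + length r + 1 = n}
   \<union> {tdelta (l @ [smult c a] @ r) - fscale c (tdelta (l @ [a] @ r)) | l r c a.
        length l + length r + 1 = n}"

definition tens_eq :: "('k::comm_ring_1 \<Rightarrow> 'h::ab_group_add \<Rightarrow> 'h) \<Rightarrow> nat \<Rightarrow> 'h list list \<Rightarrow> 'h list list \<Rightarrow> bool" where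
  "tens_eq smult n xs ys \<longleftrightarrow>
     (\<forall>t \<in> set xs \<union> set ys. length t = n) \<and>
     (frep xs - frep ys :: 'h list \<Rightarrow> 'k) \<in> module.span fscale (tens_rel smult n)"

definition k_algebra :: "('k::comm_ring_1 \<Rightarrow> 'h::ab_group_add \<Rightarrow> 'h) \<Rightarrow> ('h \<Rightarrow> 'h \<Rightarrow> 'h) \<Rightarrow> 'h \<Rightarrow> bool" where
  "k_algebra smult mult one \<longleftrightarrow>
     (\<forall>x y z. mult (mult x y) z = mult x (mult y z)) \<and>
     (\<forall>x. mult one x = x \<and> mult x one = x) \<and>
     (\<forall>x y z. mult (x + y) z = mult x z + mult y z) \<and>
     (\<forall>x y z. mult x (y + z) = mult x y + mult x z) \<and>
     (\<forall>c x y. mult (smult c x) y = smult c (mult x y) \<and> mult x (smult c y) = smult c (mult x y))"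

text \<open>Delta h is a representative of the comultiplication of h in H\<otimes>H, eps the counit,
 S the antipode.\<close>
definition hopf_algebra ::
  "('k::comm_ring_1 \<Rightarrow> 'h::ab_group_add \<Rightarrow> 'h) \<Rightarrow> ('h \<Rightarrow> 'h \<Rightarrow> 'h) \<Rightarrow> 'h \<Rightarrow>
   ('h \<Rightarrow> 'h list list) \<Rightarrow> ('h \<Rightarrow> 'k) \<Rightarrow> ('h \<Rightarrow> 'h) \<Rightarrow> bool" where
  "hopf_algebra smult mult one Delta eps S \<longleftrightarrow>
     k_algebra smult mult one \<and>
     \<comment> \<open>Delta : H -> H \<otimes> H is k-linear\<close>
     (\<forall>h. \<forall>t \<in> set (Delta h). length t = 2) \<and>
     (\<forall>x y. tens_eq smult 2 (Delta (x + y)) (Delta x @ Delta y)) \<and>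
     (\<forall>c x. tens_eq smult 2 (Delta (smult c x)) (map (\<lambda>t. [smult c (t!0), t!1]) (Delta x))) \<and>
     \<comment> \<open>coassociativity\<close>
     (\<forall>h. tens_eq smult 3
        (concat (map (\<lambda>t. map (\<lambda>u. [u!0, u!1, t!1]) (Delta (t!0))) (Delta h)))
        (concat (map (\<lambda>t. map (\<lambda>u. [t!0, u!0, u!1]) (Delta (t!1))) (Delta h)))) \<and>
     \<comment> \<open>counit\<close>
     lin_fun smult eps \<and>
     (\<forall>h. sum_list (map (\<lambda>t. smult (eps (t!0)) (t!1)) (Delta h)) = h) \<and>
     (\<forall>h. sum_list (map (\<lambda>t. smult (eps (t!1)) (t!0)) (Delta h)) = h) \<and>
     \<comment> \<open>Delta and eps are algebra maps\<close>
     (\<forall>x y. tens_eq smult 2 (Delta (mult x y))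
        (concat (map (\<lambda>t. map (\<lambda>u. [mult (t!0) (u!0), mult (t!1) (u!1)]) (Delta y)) (Delta x)))) \<and>
     tens_eq smult 2 (Delta one) [[one, one]] \<and>
     (\<forall>x y. eps (mult x y) = eps x * eps y) \<and> eps one = 1 \<and>
     \<comment> \<open>antipode\<close>
     lin_map smult S \<and>
     (\<forall>h. sum_list (map (\<lambda>t. mult (S (t!0)) (t!1)) (Delta h)) = smult (eps h) one) \<and>
     (\<forall>h. sum_list (map (\<lambda>t. mult (t!0) (S (t!1))) (Delta h)) = smult (eps h) one)"

definition separable_algebra :: "('k::comm_ring_1 \<Rightarrow> 'h::ab_group_add \<Rightarrow> 'h) \<Rightarrow> ('h \<Rightarrow> 'h \<Rightarrow> 'h) \<Rightarrow> 'h \<Rightarrow> bool" where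
  "separable_algebra smult mult one \<longleftrightarrow>
     (\<exists>e. (\<forall>t \<in> set e. length t = 2) \<and>
          sum_list (map (\<lambda>t. mult (t!0) (t!1)) e) = one \<and>
          (\<forall>a. tens_eq smult 2 (map (\<lambda>t. [mult a (t!0), t!1]) e)
                               (map (\<lambda>t. [t!0, mult (t!1) a]) e)))"

text \<open>phi is a Frobenius homomorphism: phi is in H* and h |-> (x |-> phi (x h)) is a
 bijection H -> H* (an isomorphism of left H-modules, H* having the action
 (h.f)(x) = f(x h)).\<close>
definition frobenius_hom :: "('k::comm_ring_1 \<Rightarrow> 'h::ab_group_add \<Rightarrow> 'h) \<Rightarrow> ('h \<Rightarrow> 'h \<Rightarrow> 'h) \<Rightarrow> ('h \<Rightarrow> 'k) \<Rightarrow> bool" where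
  "frobenius_hom smult mult phi \<longleftrightarrow>
     lin_fun smult phi \<and>
     bij_betw (\<lambda>h. (\<lambda>x. phi (mult x h))) UNIV {f. lin_fun smult f}"

definition frobenius_algebra :: "('k::comm_ring_1 \<Rightarrow> 'h::ab_group_add \<Rightarrow> 'h) \<Rightarrow> ('h \<Rightarrow> 'h \<Rightarrow> 'h) \<Rightarrow> 'h \<Rightarrow> bool" where
  "frobenius_algebra smult mult one \<longleftrightarrow>
     k_algebra smult mult one \<and> fg_projective smult \<and> (\<exists>phi. frobenius_hom smult mult phi)"

text \<open>Left integrals in H*, convolution (g*f)(x) = sum g(x_(1)) f(x_(2)).\<close>
definition left_integral_dual :: "('k::comm_ring_1 \<Rightarrow> 'h::ab_group_add \<Rightarrow> 'h) \<Rightarrow> 'h \<Rightarrow> ('h \<Rightarrow> 'h list list) \<Rightarrow> ('h \<Rightarrow> 'k) \<Rightarrow> bool" where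
  "left_integral_dual smult one Delta f \<longleftrightarrow>
     lin_fun smult f \<and>
     (\<forall>g. lin_fun smult g \<longrightarrow>
        (\<forall>x. sum_list (map (\<lambda>t. g (t!0) * f (t!1)) (Delta x)) = g one * f x))"

definition FH_algebra :: "('k::comm_ring_1 \<Rightarrow> 'h::ab_group_add \<Rightarrow> 'h) \<Rightarrow> ('h \<Rightarrow> 'h \<Rightarrow> 'h) \<Rightarrow> 'h \<Rightarrow> ('h \<Rightarrow> 'h list list) \<Rightarrow> bool" where
  "FH_algebra smult mult one Delta \<longleftrightarrow>
     frobenius_algebra smult mult one \<and>
     (\<exists>phi. frobenius_hom smult mult phi \<and> left_integral_dual smult one Delta phi)"

end

theory Submission
  imports Defs
begin


lemma module_fscale: "module (fscale :: 'k::comm_ring_1 \<Rightarrow> ('h list \<Rightarrow> 'k) \<Rightarrow> _)"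
  by unfold_locales (auto simp: fscale_def fun_eq_iff algebra_simps)

definition Lf :: "('k::comm_ring_1 \<Rightarrow> 'v::ab_group_add \<Rightarrow> 'v) \<Rightarrow> ('a \<Rightarrow> 'v) \<Rightarrow> ('a \<Rightarrow> 'k) \<Rightarrow> 'v" where
  "Lf scl F u = (\<Sum>q\<in>{q. u q \<noteq> 0}. scl (u q) (F q))"

lemma Lf_eq:
  assumes "module scl" "finite A" "{q. u q \<noteq> 0} \<subseteq> A"
  shows "Lf scl F u = (\<Sum>q\<in>A. scl (u q) (F q))"
  unfolding Lf_def by (rule sum.mono_neutral_left) (use assms in \<open>auto simp: module.scale_zero_left\<close>)

lemma Lf_add:
  assumes M: "module scl" and fu: "finite {q. u q \<noteq> 0}" and fv: "finite {q. v q \<noteq> 0}"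
  shows "Lf scl F (u + v) = Lf scl F u + Lf scl F v"
proof -
  let ?A = "{q. u q \<noteq> 0} \<union> {q. v q \<noteq> 0}"
  have f: "finite ?A" using fu fv by auto
  have "Lf scl F (u + v) = (\<Sum>q\<in>?A. scl ((u+v) q) (F q))" by (rule Lf_eq[OF M f]) auto
  also have "\<dots> = (\<Sum>q\<in>?A. scl (u q) (F q)) + (\<Sum>q\<in>?A. scl (v q) (F q))"
    by (simp add: module.scale_left_distrib[OF M] sum.distrib)
  also have "\<dots> = Lf scl F u + Lf scl F v"
    by (simp add: Lf_eq[OF M f, symmetric])
  finally show ?thesis .
qed

lemma Lf_diff:
  assumes M: "module scl" and fu: "finite {q. u q \<noteq> 0}" and fv: "finite {q. v q \<noteq> 0}"
  shows "Lf scl F (u - v) = Lf scl F u - Lf scl F v"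
proof -
  let ?A = "{q. u q \<noteq> 0} \<union> {q. v q \<noteq> 0}"
  have f: "finite ?A" using fu fv by auto
  have "Lf scl F (u - v) = (\<Sum>q\<in>?A. scl ((u-v) q) (F q))" by (rule Lf_eq[OF M f]) auto
  also have "\<dots> = (\<Sum>q\<in>?A. scl (u q) (F q)) - (\<Sum>q\<in>?A. scl (v q) (F q))"
    by (simp add: module.scale_left_diff_distrib[OF M] sum_subtractf)
  also have "\<dots> = Lf scl F u - Lf scl F v"
    by (simp add: Lf_eq[OF M f, symmetric])
  finally show ?thesis .
qed

lemma Lf_scale:
  assumes M: "module scl" and fu: "finite {q. u q \<noteq> 0}"
  shows "Lf scl F (fscale c u) = scl c (Lf scl F u)"
proof -
  have "Lf scl F (fscale c u) = (\<Sum>q\<in>{q. u q \<noteq> 0}. scl (fscale c u q) (F q))"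
    by (rule Lf_eq[OF M fu]) (auto simp: fscale_def)
  also have "\<dots> = scl c (Lf scl F u)"
    by (simp add: Lf_def fscale_def module.scale_sum_right[OF M] module.scale_scale[OF M])
  finally show ?thesis .
qed

lemma Lf_delta:
  assumes M: "module scl"
  shows "Lf scl F (tdelta q) = F q"
proof -
  have "Lf scl F (tdelta q) = (\<Sum>p\<in>{q}. scl (tdelta q p) (F p))"
    by (rule Lf_eq[OF M]) (auto simp: tdelta_def)
  then show ?thesis using M by (simp add: tdelta_def module.scale_one)
qed

lemma fin_delta: "finite {p. (tdelta q :: _ \<Rightarrow> 'k::comm_ring_1) p \<noteq> 0}"
  by (rule finite_subset[of _ "{q}"]) (auto simp: tdelta_def)

lemma fin_add: "finite {q. u q \<noteq> 0} \<Longrightarrow> finite {q. v q \<noteq> 0} \<Longrightarrow> finite {q. (u + v) q \<noteq> (0::'k::comm_ring_1)}"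
  by (rule finite_subset[of _ "{q. u q \<noteq> 0} \<union> {q. v q \<noteq> 0}"]) auto

lemma fin_diff: "finite {q. u q \<noteq> 0} \<Longrightarrow> finite {q. v q \<noteq> 0} \<Longrightarrow> finite {q. (u - v) q \<noteq> (0::'k::comm_ring_1)}"
  by (rule finite_subset[of _ "{q. u q \<noteq> 0} \<union> {q. v q \<noteq> 0}"]) auto

lemma fin_scale: "finite {q. u q \<noteq> 0} \<Longrightarrow> finite {q. (fscale c u) q \<noteq> (0::'k::comm_ring_1)}"
  by (rule finite_subset[of _ "{q. u q \<noteq> 0}"]) (auto simp: fscale_def)

lemma frep_Cons: "(frep (x # xs) :: _ \<Rightarrow> 'k::comm_ring_1) = tdelta x + frep xs"
  by (auto simp: frep_def tdelta_def fun_eq_iff)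

lemma frep_Nil: "(frep [] :: _ \<Rightarrow> 'k::comm_ring_1) = 0"
  by (auto simp: frep_def fun_eq_iff)

lemma frep_fin: "finite {q. (frep xs :: _ \<Rightarrow> 'k::comm_ring_1) q \<noteq> 0}"
proof (induction xs)
  case Nil then show ?case by (simp add: frep_Nil)
next
  case (Cons x xs) then show ?case by (subst frep_Cons) (rule fin_add[OF fin_delta])
qed

lemma Lf_frep:
  assumes M: "module scl"
  shows "Lf scl F (frep xs :: _ \<Rightarrow> 'k::comm_ring_1) = sum_list (map F xs)"
proof (induction xs)
  case Nil then show ?case by (simp add: frep_Nil Lf_def)
next
  case (Cons x xs)
  then show ?case
    by (simp only: frep_Cons Lf_add[OF M fin_delta frep_fin] Lf_delta[OF M] list.map sum_list.Cons)
qed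

lemma tens_descent:
  fixes smult :: "'k::comm_ring_1 \<Rightarrow> 'h::ab_group_add \<Rightarrow> 'h" and scl :: "'k \<Rightarrow> 'v::ab_group_add \<Rightarrow> 'v"
  assumes M: "module scl" and T: "tens_eq smult n xs ys"
  and add: "\<And>l r a a'. length l + length r + 1 = n \<Longrightarrow> F (l @ [a + a'] @ r) = F (l @ [a] @ r) + F (l @ [a'] @ r)"
  and sc: "\<And>l r c a. length l + length r + 1 = n \<Longrightarrow> F (l @ [smult c a] @ r) = scl c (F (l @ [a] @ r))"
  shows "sum_list (map F xs) = sum_list (map F ys)"
proof -
  let ?P = "\<lambda>u::'h list \<Rightarrow> 'k. finite {q. u q \<noteq> 0} \<and> Lf scl F u = 0"
  have rel: "?P u" if "u \<in> tens_rel smult n" for u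
    using that unfolding tens_rel_def
  proof (elim UnE CollectE exE conjE)
    fix l r a a' assume u: "u = tdelta (l @ [a + a'] @ r) - tdelta (l @ [a] @ r) - tdelta (l @ [a'] @ r)"
      and len: "length l + length r + 1 = n"
    show ?thesis unfolding u
      by (intro conjI fin_diff fin_delta)
        (simp only: Lf_diff[OF M fin_diff[OF fin_delta fin_delta] fin_delta] Lf_diff[OF M fin_delta fin_delta] Lf_delta[OF M] add[OF len], simp)
  next
    fix l r c a assume u: "u = tdelta (l @ [smult c a] @ r) - fscale c (tdelta (l @ [a] @ r))"
      and len: "length l + length r + 1 = n"
    show ?thesis unfolding u
      by (intro conjI fin_diff fin_delta fin_scale)
        (simp only: Lf_diff[OF M fin_delta fin_scale[OF fin_delta]] Lf_scale[OF M fin_delta] Lf_delta[OF M] sc[OF len], simp)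
  qed
  have span: "frep xs - frep ys \<in> module.span fscale (tens_rel smult n)"
    using T by (simp add: tens_eq_def)
  have "?P (frep xs - frep ys)"
  proof (rule module.span_induct_alt[OF module_fscale span, where h="?P"])
    show "?P 0" by (simp add: Lf_def)
  next
    fix c x y assume x: "x \<in> tens_rel smult n" and y: "?P y"
    have r: "?P x" by (rule rel[OF x])
    show "?P (fscale c x + y)" using r y
      by (intro conjI fin_add fin_scale; simp only: Lf_add[OF M fin_scale] Lf_scale[OF M]; simp add: module.scale_zero_right[OF M])
  qed
  then have "Lf scl F (frep xs) - Lf scl F (frep ys) = 0"
    by (simp add: Lf_diff[OF M frep_fin frep_fin])
  then show ?thesis by (simp add: Lf_frep[OF M])
qed



lemma module_times: "module ((*) :: 'a::comm_ring_1 \<Rightarrow> 'a \<Rightarrow> 'a)"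
  by unfold_locales (auto simp: algebra_simps)

lemma len2_cases: "length l + length r + 1 = 2 \<Longrightarrow> (l = [] \<and> (\<exists>x. r = [x])) \<or> ((\<exists>y. l = [y]) \<and> r = [])"
  by (cases l; cases r) (auto simp: length_Suc_conv)

lemma len3_cases: "length l + length r + 1 = 3 \<Longrightarrow>
   (l = [] \<and> (\<exists>x y. r = [x, y])) \<or> ((\<exists>y. l = [y]) \<and> (\<exists>x. r = [x])) \<or> ((\<exists>x y. l = [x, y]) \<and> r = [])"
  by (cases l; cases r) (auto simp: length_Suc_conv numeral_3_eq_3)

lemma sum_list_scale:
  assumes "module scl"
  shows "sum_list (map (\<lambda>t. scl c (f t)) xs) = scl c (sum_list (map f xs))"
  by (induction xs) (simp_all add: module.scale_zero_right[OF assms] module.scale_right_distrib[OF assms])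

locale hctx =
  fixes smult :: "'k::comm_ring_1 \<Rightarrow> 'h::ab_group_add \<Rightarrow> 'h"
    and mult :: "'h \<Rightarrow> 'h \<Rightarrow> 'h" and one :: 'h
    and Delta :: "'h \<Rightarrow> 'h list list" and eps :: "'h \<Rightarrow> 'k" and S :: "'h \<Rightarrow> 'h"
  assumes Mod: "module smult"
    and Hopf: "hopf_algebra smult mult one Delta eps S"
begin

definition bil :: "('k \<Rightarrow> 'v::ab_group_add \<Rightarrow> 'v) \<Rightarrow> ('h \<Rightarrow> 'h \<Rightarrow> 'v) \<Rightarrow> bool" where
  "bil scl B \<longleftrightarrow> (\<forall>a a' b. B (a + a') b = B a b + B a' b) \<and> (\<forall>a b b'. B a (b + b') = B a b + B a b')
     \<and> (\<forall>c a b. B (smult c a) b = scl c (B a b)) \<and> (\<forall>c a b. B a (smult c b) = scl c (B a b))"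

definition tril :: "('k \<Rightarrow> 'v::ab_group_add \<Rightarrow> 'v) \<Rightarrow> ('h \<Rightarrow> 'h \<Rightarrow> 'h \<Rightarrow> 'v) \<Rightarrow> bool" where
  "tril scl K \<longleftrightarrow> (\<forall>a a' b d. K (a + a') b d = K a b d + K a' b d) \<and> (\<forall>a b b' d. K a (b + b') d = K a b d + K a b' d)
     \<and> (\<forall>a b d d'. K a b (d + d') = K a b d + K a b d')
     \<and> (\<forall>c a b d. K (smult c a) b d = scl c (K a b d)) \<and> (\<forall>c a b d. K a (smult c b) d = scl c (K a b d))
     \<and> (\<forall>c a b d. K a b (smult c d) = scl c (K a b d))"

definition lin :: "('k \<Rightarrow> 'v::ab_group_add \<Rightarrow> 'v) \<Rightarrow> ('h \<Rightarrow> 'v) \<Rightarrow> bool" where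
  "lin scl f \<longleftrightarrow> (\<forall>x y. f (x + y) = f x + f y) \<and> (\<forall>c x. f (smult c x) = scl c (f x))"

definition Sw :: "'h \<Rightarrow> ('h \<Rightarrow> 'h \<Rightarrow> 'v::ab_group_add) \<Rightarrow> 'v" where
  "Sw x B = sum_list (map (\<lambda>t. B (t!0) (t!1)) (Delta x))"

lemma tens2:
  assumes M: "module scl" and B: "bil scl B" and T: "tens_eq smult 2 xs ys"
  shows "sum_list (map (\<lambda>t. B (t!0) (t!1)) xs) = sum_list (map (\<lambda>t. B (t!0) (t!1)) ys)"
proof (rule tens_descent[OF M T])
  fix l r :: "'h list" and a a' assume h: "length l + length r + 1 = 2"
  from len2_cases[OF h] show "B ((l @ [a + a'] @ r) ! 0) ((l @ [a + a'] @ r) ! 1) =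
         B ((l @ [a] @ r) ! 0) ((l @ [a] @ r) ! 1) + B ((l @ [a'] @ r) ! 0) ((l @ [a'] @ r) ! 1)"
    using B unfolding bil_def by (elim disjE conjE exE) auto
next
  fix l r :: "'h list" and c a assume h: "length l + length r + 1 = 2"
  from len2_cases[OF h] show "B ((l @ [smult c a] @ r) ! 0) ((l @ [smult c a] @ r) ! 1) =
         scl c (B ((l @ [a] @ r) ! 0) ((l @ [a] @ r) ! 1))"
    using B unfolding bil_def by (elim disjE conjE exE) auto
qed

lemma tens3:
  assumes M: "module scl" and K: "tril scl K" and T: "tens_eq smult 3 xs ys"
  shows "sum_list (map (\<lambda>t. K (t!0) (t!1) (t!2)) xs) = sum_list (map (\<lambda>t. K (t!0) (t!1) (t!2)) ys)"
proof (rule tens_descent[OF M T])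
  fix l r :: "'h list" and a a' assume h: "length l + length r + 1 = 3"
  from len3_cases[OF h] show "K ((l @ [a + a'] @ r) ! 0) ((l @ [a + a'] @ r) ! 1) ((l @ [a + a'] @ r) ! 2) =
         K ((l @ [a] @ r) ! 0) ((l @ [a] @ r) ! 1) ((l @ [a] @ r) ! 2) + K ((l @ [a'] @ r) ! 0) ((l @ [a'] @ r) ! 1) ((l @ [a'] @ r) ! 2)"
    using K unfolding tril_def by (elim disjE conjE exE) auto
next
  fix l r :: "'h list" and c a assume h: "length l + length r + 1 = 3"
  from len3_cases[OF h] show "K ((l @ [smult c a] @ r) ! 0) ((l @ [smult c a] @ r) ! 1) ((l @ [smult c a] @ r) ! 2) =
         scl c (K ((l @ [a] @ r) ! 0) ((l @ [a] @ r) ! 1) ((l @ [a] @ r) ! 2))"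
    using K unfolding tril_def by (elim disjE conjE exE) auto
qed

end



context hctx
begin

lemma alg: "k_algebra smult mult one" using Hopf by (simp add: hopf_algebra_def)

lemma m_assoc: "mult (mult x y) z = mult x (mult y z)" using alg by (simp add: k_algebra_def)
lemma m_one_left [simp]: "mult one x = x" using alg by (simp add: k_algebra_def)
lemma m_one_right [simp]: "mult x one = x" using alg by (simp add: k_algebra_def)
lemma m_add_left [simp]: "mult (x + y) z = mult x z + mult y z" using alg by (simp add: k_algebra_def)
lemma m_add_right [simp]: "mult x (y + z) = mult x y + mult x z" using alg by (simp add: k_algebra_def)
lemma m_smult_left [simp]: "mult (smult c x) y = smult c (mult x y)" using alg by (simp add: k_algebra_def)
lemma m_smult_right [simp]: "mult x (smult c y) = smult c (mult x y)" using alg by (simp add: k_algebra_def)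

lemma D_len: "t \<in> set (Delta h) \<Longrightarrow> length t = 2" using Hopf by (simp add: hopf_algebra_def)
lemma D_add: "tens_eq smult 2 (Delta (x + y)) (Delta x @ Delta y)" using Hopf by (simp add: hopf_algebra_def)
lemma D_smult: "tens_eq smult 2 (Delta (smult c x)) (map (\<lambda>t. [smult c (t!0), t!1]) (Delta x))"
  using Hopf by (simp add: hopf_algebra_def)
lemma D_coassoc: "tens_eq smult 3
        (concat (map (\<lambda>t. map (\<lambda>u. [u!0, u!1, t!1]) (Delta (t!0))) (Delta h)))
        (concat (map (\<lambda>t. map (\<lambda>u. [t!0, u!0, u!1]) (Delta (t!1))) (Delta h)))"
  using Hopf by (simp add: hopf_algebra_def)
lemma eps_lin: "lin_fun smult eps" using Hopf by (simp add: hopf_algebra_def)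
lemma eps_add [simp]: "eps (x + y) = eps x + eps y" using eps_lin by (simp add: lin_fun_def)
lemma eps_smult [simp]: "eps (smult c x) = c * eps x" using eps_lin by (simp add: lin_fun_def)
lemma counitL: "sum_list (map (\<lambda>t. smult (eps (t!0)) (t!1)) (Delta h)) = h" using Hopf by (simp add: hopf_algebra_def)
lemma counitR: "sum_list (map (\<lambda>t. smult (eps (t!1)) (t!0)) (Delta h)) = h" using Hopf by (simp add: hopf_algebra_def)
lemma D_mult: "tens_eq smult 2 (Delta (mult x y))
        (concat (map (\<lambda>t. map (\<lambda>u. [mult (t!0) (u!0), mult (t!1) (u!1)]) (Delta y)) (Delta x)))"
  using Hopf by (simp add: hopf_algebra_def)
lemma D_one: "tens_eq smult 2 (Delta one) [[one, one]]" using Hopf by (simp add: hopf_algebra_def)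
lemma eps_mult [simp]: "eps (mult x y) = eps x * eps y" using Hopf by (simp add: hopf_algebra_def)
lemma eps_one [simp]: "eps one = 1" using Hopf by (simp add: hopf_algebra_def)
lemma S_lin: "lin_map smult S" using Hopf by (simp add: hopf_algebra_def)
lemma S_add [simp]: "S (x + y) = S x + S y" using S_lin by (simp add: lin_map_def)
lemma S_smult [simp]: "S (smult c x) = smult c (S x)" using S_lin by (simp add: lin_map_def)
lemma antiL: "sum_list (map (\<lambda>t. mult (S (t!0)) (t!1)) (Delta h)) = smult (eps h) one"
  using Hopf by (simp add: hopf_algebra_def)
lemma antiR: "sum_list (map (\<lambda>t. mult (t!0) (S (t!1))) (Delta h)) = smult (eps h) one"
  using Hopf by (simp add: hopf_algebra_def)

lemma sm_add_right [simp]: "smult c (x + y) = smult c x + smult c y" using Mod by (simp add: module.scale_right_distrib)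
lemma sm_add_left [simp]: "smult (a + b) x = smult a x + smult b x" using Mod by (simp add: module.scale_left_distrib)
lemma sm_sm [simp]: "smult a (smult b x) = smult (a * b) x" using Mod by (simp add: module.scale_scale)
lemma sm_one [simp]: "smult 1 x = x" using Mod by (simp add: module.scale_one)
lemma sm_zero_left [simp]: "smult 0 x = 0" using Mod by (simp add: module.scale_zero_left)
lemma sm_zero_right [simp]: "smult c 0 = 0" using Mod by (simp add: module.scale_zero_right)
lemma sm_minus_right [simp]: "smult c (- x) = - smult c x" using Mod by (simp add: module.scale_minus_right)
lemma sm_minus_left [simp]: "smult (- c) x = - smult c x" using Mod by (simp add: module.scale_minus_left)
lemma sm_diff_right [simp]: "smult c (x - y) = smult c x - smult c y" using Mod by (simp add: module.scale_right_diff_distrib)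

lemma m_zero_left [simp]: "mult 0 x = 0" using m_add_left[of 0 0 x] by simp
lemma m_zero_right [simp]: "mult x 0 = 0" using m_add_right[of x 0 0] by simp
lemma eps_zero [simp]: "eps 0 = 0" using eps_add[of 0 0] by simp
lemma S_zero [simp]: "S 0 = 0" using S_add[of 0 0] by simp
lemma m_minus_left [simp]: "mult (- x) y = - mult x y"
proof -
  have "mult (- x) y + mult x y = 0" using m_add_left[of "-x" x y] by simp
  then show ?thesis by (rule add_eq_0_iff2[THEN iffD1])
qed
lemma m_minus_right [simp]: "mult x (- y) = - mult x y"
proof -
  have "mult x (- y) + mult x y = 0" using m_add_right[of x "-y" y] by simp
  then show ?thesis by (rule add_eq_0_iff2[THEN iffD1])
qed
lemma m_diff_left [simp]: "mult (x - y) z = mult x z - mult y z" using m_add_left[of x "-y" z] by (simp only: diff_conv_add_uminus m_minus_left)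
lemma m_diff_right [simp]: "mult z (x - y) = mult z x - mult z y" using m_add_right[of z x "-y"] by (simp only: diff_conv_add_uminus m_minus_right)
lemma eps_minus [simp]: "eps (- x) = - eps x"
proof -
  have "eps (- x) + eps x = 0" using eps_add[of "-x" x] by simp
  then show ?thesis by (rule add_eq_0_iff2[THEN iffD1])
qed
lemma S_minus [simp]: "S (- x) = - S x"
proof -
  have "S (- x) + S x = 0" using S_add[of "-x" x] by simp
  then show ?thesis by (rule add_eq_0_iff2[THEN iffD1])
qed

lemma sum_list_concat_map: "sum_list (map f (concat xss)) = sum_list (map (\<lambda>xs. sum_list (map f xs)) xss)"
  by (induction xss) simp_all

lemma lin_zero: "module scl \<Longrightarrow> lin scl f \<Longrightarrow> f 0 = 0"
  unfolding lin_def by (metis add_cancel_right_right add_0)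

lemma lin_sum_list: "module scl \<Longrightarrow> lin scl f \<Longrightarrow> f (sum_list (map g xs)) = sum_list (map (\<lambda>t. f (g t)) xs)"
  by (induction xs) (auto simp: lin_zero, simp add: lin_def)

lemma lin_sum: "module scl \<Longrightarrow> lin scl f \<Longrightarrow> f (\<Sum>j\<in>A. g j) = (\<Sum>j\<in>A. f (g j))"
  by (induction A rule: infinite_finite_induct) (auto simp: lin_zero, simp add: lin_def)

lemma Sw_add: assumes M: "module scl" and B: "bil scl B" shows "Sw (x + y) B = Sw x B + Sw y B"
  using tens2[OF M B D_add] by (simp add: Sw_def)

lemma Sw_smult: assumes M: "module scl" and B: "bil scl B" shows "Sw (smult c x) B = scl c (Sw x B)"
proof -
  have "Sw (smult c x) B = sum_list (map (\<lambda>t. B (smult c (t!0)) (t!1)) (Delta x))"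
    using tens2[OF M B D_smult] by (simp add: Sw_def o_def)
  also have "\<dots> = sum_list (map (\<lambda>t. scl c (B (t!0) (t!1))) (Delta x))"
    using B by (simp add: bil_def)
  also have "\<dots> = scl c (Sw x B)" by (simp add: sum_list_scale[OF M] Sw_def)
  finally show ?thesis .
qed

lemma Sw_zero: assumes M: "module scl" and B: "bil scl B" shows "Sw 0 B = 0"
  using Sw_smult[OF M B, of 0 0] by (simp add: module.scale_zero_left[OF M])

lemma Sw_Badd: "Sw x (\<lambda>a b. B1 a b + B2 a b) = Sw x B1 + Sw x B2"
  by (simp add: Sw_def sum_list_addf)

lemma Sw_Bscale: assumes "module scl" shows "Sw x (\<lambda>a b. scl c (B a b)) = scl c (Sw x B)"
  by (simp add: Sw_def sum_list_scale[OF assms])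

lemma Sw_lin_out: assumes "\<And>u v. psi (u + v) = psi u + psi v" "psi 0 = 0"
  shows "psi (Sw x B) = Sw x (\<lambda>a b. psi (B a b))"
proof -
  have "psi (sum_list (map f xs)) = sum_list (map (\<lambda>t. psi (f t)) xs)" for f and xs :: "'h list list"
    by (induction xs) (simp_all add: assms)
  then show ?thesis unfolding Sw_def .
qed

lemma Sw_coassoc:
  assumes M: "module scl" and K: "tril scl K"
  shows "Sw h (\<lambda>a b. Sw a (\<lambda>c d. K c d b)) = Sw h (\<lambda>a b. Sw b (\<lambda>c d. K a c d))"
  using tens3[OF M K D_coassoc[of h]] by (simp add: Sw_def sum_list_concat_map o_def)

lemma Sw_mult:
  assumes M: "module scl" and B: "bil scl B"
  shows "Sw (mult x y) B = Sw x (\<lambda>a b. Sw y (\<lambda>c d. B (mult a c) (mult b d)))"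
  using tens2[OF M B D_mult[of x y]] by (simp add: Sw_def sum_list_concat_map o_def)

lemma Sw_one:
  assumes M: "module scl" and B: "bil scl B"
  shows "Sw one B = B one one"
  using tens2[OF M B D_one] by (simp add: Sw_def)

lemma Sw_counitL:
  assumes M: "module scl" and L: "lin scl psi"
  shows "Sw h (\<lambda>a b. scl (eps a) (psi b)) = psi h"
proof -
  have "psi h = psi (sum_list (map (\<lambda>t. smult (eps (t!0)) (t!1)) (Delta h)))" using counitL[of h] by simp
  also have "\<dots> = Sw h (\<lambda>a b. scl (eps a) (psi b))"
    using L by (simp add: lin_sum_list[OF M L] Sw_def lin_def)
  finally show ?thesis by simp
qed

lemma Sw_counitR:
  assumes M: "module scl" and L: "lin scl psi"
  shows "Sw h (\<lambda>a b. scl (eps b) (psi a)) = psi h"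
proof -
  have "psi h = psi (sum_list (map (\<lambda>t. smult (eps (t!1)) (t!0)) (Delta h)))" using counitR[of h] by simp
  also have "\<dots> = Sw h (\<lambda>a b. scl (eps b) (psi a))"
    using L by (simp add: lin_sum_list[OF M L] Sw_def lin_def)
  finally show ?thesis by simp
qed

lemma Sw_antiL:
  assumes M: "module scl" and L: "lin scl psi"
  shows "Sw h (\<lambda>a b. psi (mult (S a) b)) = scl (eps h) (psi one)"
proof -
  have "scl (eps h) (psi one) = psi (smult (eps h) one)" using L by (simp add: lin_def)
  also have "\<dots> = psi (sum_list (map (\<lambda>t. mult (S (t!0)) (t!1)) (Delta h)))" by (simp only: antiL)
  also have "\<dots> = Sw h (\<lambda>a b. psi (mult (S a) b))"
    by (simp add: lin_sum_list[OF M L] Sw_def)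
  finally show ?thesis by simp
qed

lemma Sw_antiR:
  assumes M: "module scl" and L: "lin scl psi"
  shows "Sw h (\<lambda>a b. psi (mult a (S b))) = scl (eps h) (psi one)"
proof -
  have "scl (eps h) (psi one) = psi (smult (eps h) one)" using L by (simp add: lin_def)
  also have "\<dots> = psi (sum_list (map (\<lambda>t. mult (t!0) (S (t!1))) (Delta h)))" by (simp only: antiR)
  also have "\<dots> = Sw h (\<lambda>a b. psi (mult a (S b)))"
    by (simp add: lin_sum_list[OF M L] Sw_def)
  finally show ?thesis by simp
qed

end



lemma fun_sum_apply: "(\<Sum>j\<in>A. f j) x = (\<Sum>j\<in>A. f j x)"
  by (induction A rule: infinite_finite_induct) auto

lemma sum_list_swap: fixes F :: "_ \<Rightarrow> _ \<Rightarrow> 'v::comm_monoid_add" shows "sum_list (map (\<lambda>x. sum_list (map (\<lambda>y. F x y) ys)) xs) = sum_list (map (\<lambda>y. sum_list (map (\<lambda>x. F x y) xs)) ys)"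
  by (induction xs) (simp_all add: sum_list_addf)

lemma sum_list_sum_swap: fixes F :: "_ \<Rightarrow> _ \<Rightarrow> 'v::comm_monoid_add" shows "sum_list (map (\<lambda>x. \<Sum>j\<in>A. F x j) xs) = (\<Sum>j\<in>A. sum_list (map (\<lambda>x. F x j) xs))"
  by (induction xs) (simp_all add: sum.distrib)

context hctx
begin

lemmas Sw_add_k = Sw_add[OF module_times]
lemmas Sw_add_h = Sw_add[OF Mod]
lemmas Sw_smult_k = Sw_smult[OF module_times]
lemmas Sw_smult_h = Sw_smult[OF Mod]
lemmas Sw_zero_k = Sw_zero[OF module_times]
lemmas Sw_zero_h = Sw_zero[OF Mod]
lemmas Sw_Bscale_k = Sw_Bscale[OF module_times]
lemmas Sw_Bscale_h = Sw_Bscale[OF Mod]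

lemma Sw_swap: "Sw x (\<lambda>a b. Sw y (\<lambda>c d. F a b c d)) = Sw y (\<lambda>c d. Sw x (\<lambda>a b. F a b c d))"
  unfolding Sw_def by (rule sum_list_swap)

lemma Sw_Bscale_k2: "Sw x (\<lambda>a b. B a b * c) = Sw x B * (c::'k)"
  by (rule Sw_lin_out[symmetric]) (simp_all add: distrib_right)

lemma Sw_Bneg: "Sw x (\<lambda>a b. - B a b) = - Sw x B"
  by (rule Sw_lin_out[symmetric]) simp_all

lemma Sw_Bscale_h2: "Sw x (\<lambda>a b. smult (c * F a b) (G a b)) = smult c (Sw x (\<lambda>a b. smult (F a b) (G a b)))"
  by (simp add: Sw_Bscale_h[symmetric])

lemma Sw_Bscale_h3: "Sw x (\<lambda>a b. smult (F a b * c) (G a b)) = smult c (Sw x (\<lambda>a b. smult (F a b) (G a b)))"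
  by (simp add: Sw_Bscale_h[symmetric] mult.commute)

lemma Sw_Bsum: "Sw x (\<lambda>a b. \<Sum>j\<in>A. F a b j) = (\<Sum>j\<in>A. Sw x (\<lambda>a b. F a b j))"
  unfolding Sw_def by (rule sum_list_sum_swap)

lemma bilD: assumes "bil scl B"
  shows "B (a + a') b = B a b + B a' b" "B a (b + b') = B a b + B a b'"
    "B (smult c a) b = scl c (B a b)" "B a (smult c b) = scl c (B a b)"
    "B (a + a') = (\<lambda>b. B a b + B a' b)" "B (smult c a) = (\<lambda>b. scl c (B a b))"
  using assms by (auto simp: bil_def)

lemmas lsimp = bil_def tril_def lin_def Sw_add_k Sw_add_h Sw_smult_k Sw_smult_h Sw_Badd Sw_Bscale_k Sw_Bscale_h
  Sw_Bscale_k2 Sw_Bneg Sw_Bscale_h2 Sw_Bscale_h3 algebra_simps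

lemma "bil smult (\<lambda>p q. smult (eps q) p)"
  by (simp add: lsimp)

lemma "bil (*) (\<lambda>p q. eps p * eps (mult q z))"
  by (simp add: lsimp)

lemma assumes "bil smult B" shows "bil smult (\<lambda>a b. Sw (mult b y) (\<lambda>c d. B (mult a c) d))"
  using bilD[OF assms] by (simp add: lsimp)

end



context hctx
begin

lemma Sw_cong: "(\<And>a b. F a b = G a b) \<Longrightarrow> Sw x F = Sw x G"
  unfolding Sw_def by (simp add: fun_eq_iff)

lemma eps_S [simp]: "eps (S h) = eps h"
proof -
  have "Sw h (\<lambda>a b. eps (mult (S a) b)) = eps h * eps one"
    by (rule Sw_antiL[OF module_times]) (simp add: lin_def)
  moreover have "Sw h (\<lambda>a b. eps b * eps (S a)) = eps (S h)"
    by (rule Sw_counitR[OF module_times]) (simp add: lin_def)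
  ultimately show ?thesis by (simp add: mult.commute)
qed

lemma anti4:
  assumes B: "bil smult B"
  shows "Sw b (\<lambda>p q. Sw p (\<lambda>p1 p2. Sw q (\<lambda>q1 q2. B (mult p1 (S q2)) (mult p2 (S q1))))) = smult (eps b) (B one one)"
proof -
  note bd = bilD[OF B]
  have "Sw b (\<lambda>p q. Sw p (\<lambda>p1 p2. Sw q (\<lambda>q1 q2. B (mult p1 (S q2)) (mult p2 (S q1)))))
      = Sw b (\<lambda>p q. Sw q (\<lambda>q1 q2. Sw p (\<lambda>p1 p2. B (mult p1 (S q2)) (mult p2 (S q1)))))"
    by (rule Sw_cong, rule Sw_swap)
  also have "\<dots> = Sw b (\<lambda>a q2. Sw a (\<lambda>p q1. Sw p (\<lambda>p1 p2. B (mult p1 (S q2)) (mult p2 (S q1)))))"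
    by (rule Sw_coassoc[OF Mod, symmetric]) (use bd in \<open>simp add: lsimp\<close>)
  also have "\<dots> = Sw b (\<lambda>a q2. Sw a (\<lambda>p1 m. Sw m (\<lambda>x y. B (mult p1 (S q2)) (mult x (S y)))))"
  proof -
    have "\<And>a q2. Sw a (\<lambda>p q1. Sw p (\<lambda>p1 p2. B (mult p1 (S q2)) (mult p2 (S q1))))
       = Sw a (\<lambda>p1 m. Sw m (\<lambda>x y. B (mult p1 (S q2)) (mult x (S y))))"
      by (rule Sw_coassoc[OF Mod]) (use bd in \<open>simp add: lsimp\<close>)
    then show ?thesis by (simp only:)
  qed
  also have "\<dots> = Sw b (\<lambda>a q2. Sw a (\<lambda>p1 m. smult (eps m) (B (mult p1 (S q2)) one)))"
  proof -
    have "\<And>X m. Sw m (\<lambda>x y. B X (mult x (S y))) = smult (eps m) (B X one)"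
      by (rule Sw_antiR[OF Mod]) (use bd in \<open>simp add: lsimp\<close>)
    then show ?thesis by (simp only:)
  qed
  also have "\<dots> = Sw b (\<lambda>a q2. B (mult a (S q2)) one)"
  proof -
    have "\<And>a q2. Sw a (\<lambda>p1 m. smult (eps m) (B (mult p1 (S q2)) one)) = B (mult a (S q2)) one"
      by (rule Sw_counitR[OF Mod]) (use bd in \<open>simp add: lsimp\<close>)
    then show ?thesis by (simp only:)
  qed
  also have "\<dots> = smult (eps b) (B one one)"
    by (rule Sw_antiR[OF Mod]) (use bd in \<open>simp add: lsimp\<close>)
  finally show ?thesis .
qed

lemma Sw_S:
  assumes B: "bil smult B"
  shows "Sw (S h) B = Sw h (\<lambda>a b. B (S b) (S a))"
proof -
  note bd = bilD[OF B]
  have "Sw (S h) B = Sw h (\<lambda>a b. smult (eps b) (Sw (S a) B))"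
    by (rule Sw_counitR[OF Mod, symmetric]) (use bd in \<open>simp add: lsimp\<close>)
  also have "\<dots> = Sw h (\<lambda>a b. Sw (S a) (\<lambda>c d. Sw b (\<lambda>p q. Sw p (\<lambda>p1 p2. Sw q (\<lambda>q1 q2.
        B (mult c (mult p1 (S q2))) (mult d (mult p2 (S q1))))))))"
  proof -
    have "\<And>b c d. smult (eps b) (B c d) = Sw b (\<lambda>p q. Sw p (\<lambda>p1 p2. Sw q (\<lambda>q1 q2.
        B (mult c (mult p1 (S q2))) (mult d (mult p2 (S q1))))))"
      by (subst anti4) (use bd in \<open>simp_all add: lsimp\<close>)
    then show ?thesis by (simp only: Sw_Bscale_h[symmetric])
  qed
  also have "\<dots> = Sw h (\<lambda>a b. Sw b (\<lambda>p q. Sw (S a) (\<lambda>c d. Sw p (\<lambda>p1 p2. Sw q (\<lambda>q1 q2.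
        B (mult c (mult p1 (S q2))) (mult d (mult p2 (S q1))))))))"
    by (rule Sw_cong, rule Sw_swap)
  also have "\<dots> = Sw h (\<lambda>a b. Sw b (\<lambda>p q. Sw q (\<lambda>q1 q2. Sw (S a) (\<lambda>c d. Sw p (\<lambda>p1 p2.
        B (mult (mult c p1) (S q2)) (mult (mult d p2) (S q1)))))))"
  proof -
    have "\<And>a p q. Sw (S a) (\<lambda>c d. Sw p (\<lambda>p1 p2. Sw q (\<lambda>q1 q2.
        B (mult c (mult p1 (S q2))) (mult d (mult p2 (S q1))))))
      = Sw (S a) (\<lambda>c d. Sw q (\<lambda>q1 q2. Sw p (\<lambda>p1 p2.
        B (mult c (mult p1 (S q2))) (mult d (mult p2 (S q1))))))"
      by (rule Sw_cong, rule Sw_swap)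
    moreover have "\<And>a p q. Sw (S a) (\<lambda>c d. Sw q (\<lambda>q1 q2. Sw p (\<lambda>p1 p2.
        B (mult c (mult p1 (S q2))) (mult d (mult p2 (S q1))))))
      = Sw q (\<lambda>q1 q2. Sw (S a) (\<lambda>c d. Sw p (\<lambda>p1 p2.
        B (mult (mult c p1) (S q2)) (mult (mult d p2) (S q1)))))"
      by (simp only: m_assoc, rule Sw_swap)
    ultimately show ?thesis by (simp only:)
  qed
  also have "\<dots> = Sw h (\<lambda>a b. Sw b (\<lambda>p q. Sw q (\<lambda>q1 q2. Sw (mult (S a) p) (\<lambda>u v.
        B (mult u (S q2)) (mult v (S q1))))))"
  proof -
    have "\<And>a p q1 q2. Sw (mult (S a) p) (\<lambda>u v. B (mult u (S q2)) (mult v (S q1)))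
       = Sw (S a) (\<lambda>c d. Sw p (\<lambda>p1 p2. B (mult (mult c p1) (S q2)) (mult (mult d p2) (S q1))))"
      by (rule Sw_mult[OF Mod]) (use bd in \<open>simp add: lsimp\<close>)
    then show ?thesis by (simp only:)
  qed
  also have "\<dots> = Sw h (\<lambda>a b. Sw a (\<lambda>c d. Sw b (\<lambda>q1 q2. Sw (mult (S c) d) (\<lambda>u v.
        B (mult u (S q2)) (mult v (S q1))))))"
    by (rule Sw_coassoc[OF Mod, symmetric]) (use bd in \<open>simp add: lsimp\<close>)
  also have "\<dots> = Sw h (\<lambda>a b. Sw b (\<lambda>q1 q2. Sw a (\<lambda>c d. Sw (mult (S c) d) (\<lambda>u v.
        B (mult u (S q2)) (mult v (S q1))))))"
    by (rule Sw_cong, rule Sw_swap)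
  also have "\<dots> = Sw h (\<lambda>a b. Sw b (\<lambda>q1 q2. smult (eps a) (B (S q2) (S q1))))"
  proof -
    have "\<And>a q1 q2. Sw a (\<lambda>c d. Sw (mult (S c) d) (\<lambda>u v. B (mult u (S q2)) (mult v (S q1))))
       = smult (eps a) (Sw one (\<lambda>u v. B (mult u (S q2)) (mult v (S q1))))"
      by (rule Sw_antiL[OF Mod]) (use bd in \<open>simp add: lsimp\<close>)
    moreover have "\<And>q1 q2. Sw one (\<lambda>u v. B (mult u (S q2)) (mult v (S q1))) = B (S q2) (S q1)"
      by (subst Sw_one[OF Mod]) (use bd in \<open>simp_all add: lsimp\<close>)
    ultimately show ?thesis by (simp only:)
  qed
  also have "\<dots> = Sw h (\<lambda>a b. smult (eps a) (Sw b (\<lambda>q1 q2. B (S q2) (S q1))))"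
    by (simp only: Sw_Bscale_h)
  also have "\<dots> = Sw h (\<lambda>q1 q2. B (S q2) (S q1))"
    by (rule Sw_counitL[OF Mod]) (use bd in \<open>simp add: lsimp\<close>)
  finally show ?thesis .
qed

end



context hctx
begin

lemma Sw_SS:
  assumes B: "bil smult B"
  shows "Sw (S (S h)) B = Sw h (\<lambda>a b. B (S (S a)) (S (S b)))"
proof -
  note bd = bilD[OF B]
  have "Sw (S (S h)) B = Sw (S h) (\<lambda>a b. B (S b) (S a))" by (rule Sw_S[OF B])
  also have "\<dots> = Sw h (\<lambda>a b. B (S (S a)) (S (S b)))"
    by (subst Sw_S) (use bd in \<open>simp_all add: lsimp\<close>)
  finally show ?thesis .
qed

lemma SS_anti: "Sw y (\<lambda>a b. mult (S (S b)) (S a)) = smult (eps y) one"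
proof -
  have "Sw (S y) (\<lambda>a b. mult (S a) b) = Sw y (\<lambda>a b. mult (S (S b)) (S a))"
    by (rule Sw_S) (simp add: lsimp)
  moreover have "Sw (S y) (\<lambda>a b. mult (S a) b) = smult (eps (S y)) one"
    by (rule Sw_antiL[OF Mod, where psi="\<lambda>x. x", simplified]) (simp add: lsimp)
  ultimately show ?thesis by simp
qed

end

locale hfull = hctx smult mult one Delta eps S
  for smult :: "'k::comm_ring_1 \<Rightarrow> 'h::ab_group_add \<Rightarrow> 'h"
    and mult :: "'h \<Rightarrow> 'h \<Rightarrow> 'h" and one :: 'h
    and Delta :: "'h \<Rightarrow> 'h list list" and eps :: "'h \<Rightarrow> 'k" and S :: "'h \<Rightarrow> 'h" +
  fixes n :: nat and ii :: "'h \<Rightarrow> nat \<Rightarrow> 'k" and pp :: "(nat \<Rightarrow> 'k) \<Rightarrow> 'h" and e :: "'h list list"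
  assumes ii_add: "ii (x + y) = ii x + ii y"
    and ii_sm: "ii (smult c x) = (\<lambda>j. c * ii x j)"
    and ii_supp: "n \<le> j \<Longrightarrow> ii x j = 0"
    and pp_add: "pp (u + v) = pp u + pp v"
    and pp_sm: "pp (\<lambda>j. c * u j) = smult c (pp u)"
    and pp_ii: "pp (ii x) = x"
    and e_one: "sum_list (map (\<lambda>t. mult (t!0) (t!1)) e) = one"
    and e_sep: "tens_eq smult 2 (map (\<lambda>t. [mult a (t!0), t!1]) e) (map (\<lambda>t. [t!0, mult (t!1) a]) e)"
begin

definition hb :: "nat \<Rightarrow> 'h" where "hb j = pp (\<lambda>m. if m = j then 1 else 0)"
definition fb :: "nat \<Rightarrow> 'h \<Rightarrow> 'k" where "fb j x = ii x j"

lemma fb_add [simp]: "fb j (x + y) = fb j x + fb j y" by (simp add: fb_def ii_add)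
lemma fb_smult [simp]: "fb j (smult c x) = c * fb j x" by (simp add: fb_def ii_sm)
lemma fb_zero [simp]: "fb j 0 = 0" using fb_smult[of j 0 0] by simp
lemma fb_lin: "lin (*) (fb j)" by (simp add: lin_def)

lemma pp_zero': "pp (\<lambda>a. 0) = 0" using pp_sm[of 0 "\<lambda>a. 0"] by simp
lemma pp_zero: "pp 0 = 0" using pp_zero' by (simp add: zero_fun_def)

lemma pp_sum: "pp (\<Sum>j<(N::nat). (\<lambda>m. c j * d j m)) = (\<Sum>j<N. smult (c j) (pp (d j)))"
proof (induction N)
  case 0 then show ?case by (simp add: pp_zero pp_zero')
next
  case (Suc N) then show ?case by (simp only: sum.lessThan_Suc pp_add pp_sm)
qed

lemma dual: "x = (\<Sum>j<n. smult (fb j x) (hb j))"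
proof -
  have "ii x = (\<Sum>j<n. (\<lambda>m. ii x j * (if m = j then 1 else 0)))"
  proof
    fix m
    show "ii x m = (\<Sum>j<n. (\<lambda>m. ii x j * (if m = j then 1 else 0))) m"
      by (cases "m < n") (auto simp: fun_sum_apply ii_supp if_distrib cong: if_cong)
  qed
  then have "x = pp (\<Sum>j<n. (\<lambda>m. ii x j * (if m = j then 1 else 0)))" by (simp add: pp_ii)
  then show ?thesis by (simp add: pp_sum fb_def hb_def)
qed

lemma lin_dual:
  assumes M: "module scl" and L: "lin scl g"
  shows "g x = (\<Sum>j<n. scl (fb j x) (g (hb j)))"
proof -
  have "g x = g (\<Sum>j<n. smult (fb j x) (hb j))" by (subst dual) (rule refl)
  also have "\<dots> = (\<Sum>j<n. scl (fb j x) (g (hb j)))"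
    using L by (simp add: lin_sum[OF M L] lin_def)
  finally show ?thesis .
qed

lemma ext_fb: assumes "\<And>j. j < n \<Longrightarrow> fb j x = fb j y" shows "x = y"
  using assms by (subst dual, subst (2) dual) simp

definition tt :: 'h where "tt = sum_list (map (\<lambda>u. smult (eps (u!1)) (u!0)) e)"
definition tt' :: 'h where "tt' = sum_list (map (\<lambda>u. smult (eps (u!0)) (u!1)) e)"

lemma e_sep_sum:
  assumes M: "module scl" and B: "bil scl B"
  shows "sum_list (map (\<lambda>u. B (mult a (u!0)) (u!1)) e) = sum_list (map (\<lambda>u. B (u!0) (mult (u!1) a)) e)"
  using tens2[OF M B e_sep[of a]] by (simp add: o_def)

lemma lin_multL: "lin smult (mult a)" by (simp add: lin_def)
lemma lin_multR: "lin smult (\<lambda>x. mult x a)" by (simp add: lin_def)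
lemma lin_eps: "lin (*) eps" by (simp add: lin_def)

lemma t_left: "mult a tt = smult (eps a) tt"
proof -
  have "mult a tt = sum_list (map (\<lambda>u. smult (eps (u!1)) (mult a (u!0))) e)"
    unfolding tt_def by (simp add: lin_sum_list[OF Mod lin_multL])
  also have "\<dots> = sum_list (map (\<lambda>u. smult (eps (mult (u!1) a)) (u!0)) e)"
    using e_sep_sum[OF Mod, of "\<lambda>p q. smult (eps q) p" a] by (simp add: lsimp)
  also have "\<dots> = smult (eps a) tt"
    unfolding tt_def by (simp add: sum_list_scale[OF Mod, symmetric] mult.commute)
  finally show ?thesis .
qed

lemma t'_right: "mult tt' a = smult (eps a) tt'"
proof -
  have "mult tt' a = sum_list (map (\<lambda>u. smult (eps (u!0)) (mult (u!1) a)) e)"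
    unfolding tt'_def by (simp add: lin_sum_list[OF Mod lin_multR])
  also have "\<dots> = sum_list (map (\<lambda>u. smult (eps (mult a (u!0))) (u!1)) e)"
    using e_sep_sum[OF Mod, of "\<lambda>p q. smult (eps p) q" a] by (simp add: lsimp)
  also have "\<dots> = smult (eps a) tt'"
    unfolding tt'_def by (simp add: sum_list_scale[OF Mod, symmetric])
  finally show ?thesis .
qed

lemma eps_tt [simp]: "eps tt = 1"
proof -
  have "eps tt = sum_list (map (\<lambda>u. eps (mult (u!0) (u!1))) e)"
    unfolding tt_def by (simp add: lin_sum_list[OF module_times lin_eps] mult.commute)
  also have "\<dots> = eps one" by (simp add: e_one[symmetric] lin_sum_list[OF module_times lin_eps])
  finally show ?thesis by simp
qed

lemma eps_tt' : "eps tt' = 1"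
proof -
  have "eps tt' = sum_list (map (\<lambda>u. eps (mult (u!0) (u!1))) e)"
    unfolding tt'_def by (simp add: lin_sum_list[OF module_times lin_eps])
  also have "\<dots> = eps one" by (simp add: e_one[symmetric] lin_sum_list[OF module_times lin_eps])
  finally show ?thesis by simp
qed

lemma tt'_eq: "tt' = tt"
proof -
  have "mult tt' tt = tt" by (simp add: t_left eps_tt')
  moreover have "mult tt' tt = tt'" by (simp add: t'_right)
  ultimately show ?thesis by simp
qed

lemma t_right: "mult tt a = smult (eps a) tt"
  using t'_right by (simp add: tt'_eq)

end



context hctx
begin

lemma SS_anti_psi:
  assumes L: "lin smult psi"
  shows "Sw a (\<lambda>c d. psi (mult (S (S d)) (S c))) = smult (eps a) (psi one)"
proof -
  have "Sw a (\<lambda>c d. psi (mult (S (S d)) (S c))) = psi (Sw a (\<lambda>c d. mult (S (S d)) (S c)))"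
    by (rule Sw_lin_out[symmetric]) (use L in \<open>simp_all add: lin_def lin_zero[OF Mod L]\<close>)
  also have "\<dots> = smult (eps a) (psi one)" using L by (simp add: SS_anti lin_def)
  finally show ?thesis .
qed

lemma stepA:
  assumes B: "bil smult F"
  shows "Sw x (\<lambda>a b. F a (mult b (S (S h)))) = Sw h (\<lambda>p0 p1. Sw (mult x (S (S p1))) (\<lambda>w0 w1. F (mult w0 (S p0)) w1))"
proof -
  note bd = bilD[OF B]
  have "Sw h (\<lambda>p0 p1. Sw (mult x (S (S p1))) (\<lambda>w0 w1. F (mult w0 (S p0)) w1))
     = Sw h (\<lambda>p0 p1. Sw x (\<lambda>u0 u1. Sw (S (S p1)) (\<lambda>r0 r1. F (mult (mult u0 r0) (S p0)) (mult u1 r1))))"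
  proof -
    have "\<And>p0 p1. Sw (mult x (S (S p1))) (\<lambda>w0 w1. F (mult w0 (S p0)) w1)
       = Sw x (\<lambda>u0 u1. Sw (S (S p1)) (\<lambda>r0 r1. F (mult (mult u0 r0) (S p0)) (mult u1 r1)))"
      by (rule Sw_mult[OF Mod]) (use bd in \<open>simp add: lsimp\<close>)
    then show ?thesis by (simp only:)
  qed
  also have "\<dots> = Sw h (\<lambda>p0 p1. Sw x (\<lambda>u0 u1. Sw p1 (\<lambda>q0 q1. F (mult (mult u0 (S (S q0))) (S p0)) (mult u1 (S (S q1))))))"
  proof -
    have "\<And>p0 p1 u0 u1. Sw (S (S p1)) (\<lambda>r0 r1. F (mult (mult u0 r0) (S p0)) (mult u1 r1))
       = Sw p1 (\<lambda>q0 q1. F (mult (mult u0 (S (S q0))) (S p0)) (mult u1 (S (S q1))))"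
      by (rule Sw_SS) (use bd in \<open>simp add: lsimp\<close>)
    then show ?thesis by (simp only:)
  qed
  also have "\<dots> = Sw h (\<lambda>p0 p1. Sw p1 (\<lambda>q0 q1. Sw x (\<lambda>u0 u1. F (mult (mult u0 (S (S q0))) (S p0)) (mult u1 (S (S q1))))))"
    by (rule Sw_cong, rule Sw_swap)
  also have "\<dots> = Sw h (\<lambda>a b. Sw a (\<lambda>c d. Sw x (\<lambda>u0 u1. F (mult (mult u0 (S (S d))) (S c)) (mult u1 (S (S b))))))"
    by (rule Sw_coassoc[OF Mod, symmetric]) (use bd in \<open>simp add: lsimp\<close>)
  also have "\<dots> = Sw h (\<lambda>a b. Sw x (\<lambda>u0 u1. Sw a (\<lambda>c d. F (mult u0 (mult (S (S d)) (S c))) (mult u1 (S (S b))))))"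
    by (simp only: m_assoc, rule Sw_cong, rule Sw_swap)
  also have "\<dots> = Sw h (\<lambda>a b. Sw x (\<lambda>u0 u1. smult (eps a) (F u0 (mult u1 (S (S b))))))"
  proof -
    have "\<And>a b u0 u1. Sw a (\<lambda>c d. F (mult u0 (mult (S (S d)) (S c))) (mult u1 (S (S b))))
        = smult (eps a) (F (mult u0 one) (mult u1 (S (S b))))"
      by (rule SS_anti_psi) (use bd in \<open>simp add: lsimp\<close>)
    then show ?thesis by simp
  qed
  also have "\<dots> = Sw h (\<lambda>a b. smult (eps a) (Sw x (\<lambda>u0 u1. F u0 (mult u1 (S (S b))))))"
    by (simp only: Sw_Bscale_h)
  also have "\<dots> = Sw x (\<lambda>u0 u1. F u0 (mult u1 (S (S h))))"
    by (rule Sw_counitL[OF Mod]) (use bd in \<open>simp add: lsimp\<close>)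
  finally show ?thesis by simp
qed

end

context hfull
begin

definition phi :: "'h \<Rightarrow> 'k" where "phi x = (\<Sum>j<n. fb j (mult x (S (S (hb j)))))"

lemma phi_add [simp]: "phi (x + y) = phi x + phi y" by (simp add: phi_def sum.distrib)
lemma phi_smult [simp]: "phi (smult c x) = c * phi x" by (simp add: phi_def sum_distrib_left)
lemma phi_lin: "lin (*) phi" by (simp add: lin_def)
lemma phi_lin_fun: "lin_fun smult phi" by (simp add: lin_fun_def)

lemma phi_t: "phi tt = 1"
proof -
  have "phi tt = (\<Sum>j<n. fb j tt * eps (hb j))"
    by (simp add: phi_def t_right mult.commute)
  also have "\<dots> = eps tt" by (rule lin_dual[OF module_times lin_eps, symmetric])
  finally show ?thesis by simp
qed

lemma integral_H: "Sw x (\<lambda>a b. smult (phi b) a) = smult (phi x) one"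
proof -
  let ?W = "\<lambda>k. mult x (S (S (hb k)))"
  have "Sw x (\<lambda>a b. smult (phi b) a) = (\<Sum>j<n. Sw x (\<lambda>a b. smult (fb j (mult b (S (S (hb j))))) a))"
    by (simp add: phi_def module.scale_sum_left[OF Mod] Sw_Bsum)
  also have "\<dots> = (\<Sum>j<n. Sw (hb j) (\<lambda>p0 p1. Sw (mult x (S (S p1))) (\<lambda>w0 w1. smult (fb j w1) (mult w0 (S p0)))))"
    by (rule sum.cong[OF refl], rule stepA) (simp add: lsimp)
  also have "\<dots> = (\<Sum>j<n. \<Sum>k<n. Sw (hb j) (\<lambda>p0 p1. smult (fb k p1) (Sw (?W k) (\<lambda>w0 w1. smult (fb j w1) (mult w0 (S p0))))))"
  proof -
    have "\<And>j p0 p1. Sw (mult x (S (S p1))) (\<lambda>w0 w1. smult (fb j w1) (mult w0 (S p0)))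
        = (\<Sum>k<n. smult (fb k p1) (Sw (?W k) (\<lambda>w0 w1. smult (fb j w1) (mult w0 (S p0)))))"
      by (rule lin_dual[OF Mod]) (simp add: lsimp)
    note loc = this
    show ?thesis
      by (rule sum.cong[OF refl], subst Sw_Bsum[symmetric], rule Sw_cong, rule loc)
  qed
  also have "\<dots> = (\<Sum>k<n. Sw (?W k) (\<lambda>w0 w1. \<Sum>j<n. smult (fb j w1) (Sw (hb j) (\<lambda>p0 p1. smult (fb k p1) (mult w0 (S p0))))))"
  proof -
    have "\<And>j k. Sw (hb j) (\<lambda>p0 p1. smult (fb k p1) (Sw (?W k) (\<lambda>w0 w1. smult (fb j w1) (mult w0 (S p0)))))
      = Sw (?W k) (\<lambda>w0 w1. smult (fb j w1) (Sw (hb j) (\<lambda>p0 p1. smult (fb k p1) (mult w0 (S p0)))))"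
    proof -
      fix j k
      have "Sw (hb j) (\<lambda>p0 p1. smult (fb k p1) (Sw (?W k) (\<lambda>w0 w1. smult (fb j w1) (mult w0 (S p0)))))
        = Sw (hb j) (\<lambda>p0 p1. Sw (?W k) (\<lambda>w0 w1. smult (fb j w1) (smult (fb k p1) (mult w0 (S p0)))))"
        by (simp only: Sw_Bscale_h[symmetric]) (simp add: mult.commute)
      also have "\<dots> = Sw (?W k) (\<lambda>w0 w1. Sw (hb j) (\<lambda>p0 p1. smult (fb j w1) (smult (fb k p1) (mult w0 (S p0)))))"
        by (rule Sw_swap)
      also have "\<dots> = Sw (?W k) (\<lambda>w0 w1. smult (fb j w1) (Sw (hb j) (\<lambda>p0 p1. smult (fb k p1) (mult w0 (S p0)))))"
        by (simp only: Sw_Bscale_h)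
      finally show "?thesis j k" .
    qed
    note loc = this
    show ?thesis
      by (subst sum.swap, rule sum.cong[OF refl], subst Sw_Bsum, rule sum.cong[OF refl], rule loc)
  qed
  also have "\<dots> = (\<Sum>k<n. Sw (?W k) (\<lambda>w0 w1. Sw w1 (\<lambda>p0 p1. smult (fb k p1) (mult w0 (S p0)))))"
  proof -
    have "\<And>k w0 w1. Sw w1 (\<lambda>p0 p1. smult (fb k p1) (mult w0 (S p0)))
       = (\<Sum>j<n. smult (fb j w1) (Sw (hb j) (\<lambda>p0 p1. smult (fb k p1) (mult w0 (S p0)))))"
      by (rule lin_dual[OF Mod]) (simp add: lsimp)
    note loc = this
    show ?thesis by (simp only: loc[symmetric])
  qed
  also have "\<dots> = (\<Sum>k<n. Sw (?W k) (\<lambda>a b. Sw a (\<lambda>c d. smult (fb k b) (mult c (S d)))))"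
  proof -
    have "\<And>k. Sw (?W k) (\<lambda>w0 w1. Sw w1 (\<lambda>p0 p1. smult (fb k p1) (mult w0 (S p0))))
       = Sw (?W k) (\<lambda>a b. Sw a (\<lambda>c d. smult (fb k b) (mult c (S d))))"
      by (rule Sw_coassoc[OF Mod, symmetric]) (simp add: lsimp)
    then show ?thesis by (simp only:)
  qed
  also have "\<dots> = (\<Sum>k<n. Sw (?W k) (\<lambda>a b. smult (eps a) (smult (fb k b) one)))"
  proof -
    have "\<And>k a b. Sw a (\<lambda>c d. smult (fb k b) (mult c (S d))) = smult (eps a) (smult (fb k b) one)"
      by (rule Sw_antiR[OF Mod]) (simp add: lsimp)
    then show ?thesis by (simp only:)
  qed
  also have "\<dots> = (\<Sum>k<n. smult (fb k (?W k)) one)"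
  proof -
    have "\<And>k. Sw (?W k) (\<lambda>a b. smult (eps a) (smult (fb k b) one)) = smult (fb k (?W k)) one"
      by (rule Sw_counitL[OF Mod]) (simp add: lsimp)
    then show ?thesis by (simp only:)
  qed
  also have "\<dots> = smult (phi x) one"
    by (simp add: phi_def module.scale_sum_left[OF Mod])
  finally show ?thesis .
qed

end



context hfull
begin

lemma Sw_mult_out: "mult c (Sw w B) = Sw w (\<lambda>a b. mult c (B a b))"
  by (rule Sw_lin_out) simp_all

lemma Sw_fb_out: "fb j (Sw w B) = Sw w (\<lambda>a b. fb j (B a b))"
  by (rule Sw_lin_out) simp_all

definition integ :: "('h \<Rightarrow> 'k) \<Rightarrow> bool" where
  "integ mu \<longleftrightarrow> lin (*) mu \<and> (\<forall>z. Sw z (\<lambda>a b. smult (mu b) a) = smult (mu z) one)"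

lemma integ_phi: "integ phi" by (simp add: integ_def phi_lin integral_H)

lemma star:
  assumes I: "integ mu"
  shows "Sw y (\<lambda>u0 u1. smult (mu (mult x u1)) u0) = Sw x (\<lambda>v0 v1. smult (mu (mult v1 y)) (S v0))"
proof -
  have L: "lin (*) mu" and H: "\<And>z. Sw z (\<lambda>a b. smult (mu b) a) = smult (mu z) one"
    using I by (auto simp: integ_def)
  have ma [simp]: "mu (a + b) = mu a + mu b" "mu (smult c a) = c * mu a" for a b c
    using L by (auto simp: lin_def)
  have "Sw x (\<lambda>v0 v1. smult (mu (mult v1 y)) (S v0)) = Sw x (\<lambda>v0 v1. mult (S v0) (Sw (mult v1 y) (\<lambda>a b. smult (mu b) a)))"
    by (simp add: H)
  also have "\<dots> = Sw x (\<lambda>v0 v1. Sw (mult v1 y) (\<lambda>a b. smult (mu b) (mult (S v0) a)))"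
  proof -
    have "\<And>v0 w. mult (S v0) (Sw w (\<lambda>a b. smult (mu b) a)) = Sw w (\<lambda>a b. smult (mu b) (mult (S v0) a))"
      by (simp add: Sw_mult_out)
    then show ?thesis by (simp only:)
  qed
  also have "\<dots> = Sw x (\<lambda>v0 v1. Sw v1 (\<lambda>w0 w1. Sw y (\<lambda>u0 u1. smult (mu (mult w1 u1)) (mult (S v0) (mult w0 u0)))))"
  proof -
    have "\<And>v0 v1. Sw (mult v1 y) (\<lambda>a b. smult (mu b) (mult (S v0) a))
       = Sw v1 (\<lambda>w0 w1. Sw y (\<lambda>u0 u1. smult (mu (mult w1 u1)) (mult (S v0) (mult w0 u0))))"
      by (rule Sw_mult[OF Mod]) (simp add: lsimp)
    then show ?thesis by (simp only:)
  qed
  also have "\<dots> = Sw x (\<lambda>a b. Sw a (\<lambda>c d. Sw y (\<lambda>u0 u1. smult (mu (mult b u1)) (mult (S c) (mult d u0)))))"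
    by (rule Sw_coassoc[OF Mod, symmetric]) (simp add: lsimp)
  also have "\<dots> = Sw x (\<lambda>a b. Sw y (\<lambda>u0 u1. Sw a (\<lambda>c d. smult (mu (mult b u1)) (mult (mult (S c) d) u0))))"
    by (simp only: m_assoc, rule Sw_cong, rule Sw_swap)
  also have "\<dots> = Sw x (\<lambda>a b. Sw y (\<lambda>u0 u1. smult (eps a) (smult (mu (mult b u1)) u0)))"
  proof -
    have "\<And>a b u0 u1. Sw a (\<lambda>c d. smult (mu (mult b u1)) (mult (mult (S c) d) u0))
       = smult (eps a) (smult (mu (mult b u1)) (mult one u0))"
      by (rule Sw_antiL[OF Mod]) (simp add: lsimp)
    then show ?thesis by simp
  qed
  also have "\<dots> = Sw x (\<lambda>a b. smult (eps a) (Sw y (\<lambda>u0 u1. smult (mu (mult b u1)) u0)))"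
    by (simp only: Sw_Bscale_h)
  also have "\<dots> = Sw y (\<lambda>u0 u1. smult (mu (mult x u1)) u0)"
    by (rule Sw_counitL[OF Mod]) (simp add: lsimp)
  finally show ?thesis by simp
qed

lemma C_lemma:
  assumes I: "integ mu"
  shows "Sw tt (\<lambda>u0 u1. smult (mu (mult x u1)) u0) = smult (mu tt) (S x)"
proof -
  have L: "lin (*) mu" using I by (auto simp: integ_def)
  have ma [simp]: "mu (a + b) = mu a + mu b" "mu (smult c a) = c * mu a" for a b c
    using L by (auto simp: lin_def)
  have "Sw tt (\<lambda>u0 u1. smult (mu (mult x u1)) u0) = Sw x (\<lambda>v0 v1. smult (mu (mult v1 tt)) (S v0))"
    by (rule star[OF I])
  also have "\<dots> = Sw x (\<lambda>v0 v1. smult (eps v1) (smult (mu tt) (S v0)))"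
    by (simp add: t_left mult.commute)
  also have "\<dots> = smult (mu tt) (S x)"
    by (rule Sw_counitR[OF Mod]) (simp add: lsimp)
  finally show ?thesis .
qed

lemma B_lemma:
  assumes I: "integ mu"
  shows "smult (mu tt) h = Sw tt (\<lambda>v0 v1. smult (mu (mult v1 h)) (S v0))"
proof -
  have L: "lin (*) mu" using I by (auto simp: integ_def)
  have ma [simp]: "mu (a + b) = mu a + mu b" "mu (smult c a) = c * mu a" for a b c
    using L by (auto simp: lin_def)
  have "smult (mu tt) h = Sw h (\<lambda>u0 u1. smult (eps u1) (smult (mu tt) u0))"
    by (rule Sw_counitR[OF Mod, symmetric]) (simp add: lsimp)
  also have "\<dots> = Sw h (\<lambda>u0 u1. smult (mu (mult tt u1)) u0)"
    by (simp add: t_right mult.commute)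
  also have "\<dots> = Sw tt (\<lambda>v0 v1. smult (mu (mult v1 h)) (S v0))"
    by (rule star[OF I])
  finally show ?thesis .
qed

definition Psi :: "'h \<Rightarrow> 'k" where "Psi y = (\<Sum>j<n. fb j (S (mult y (S (hb j)))))"

lemma uniq0:
  assumes I: "integ mu"
  shows "mu y = mu tt * Psi y"
proof -
  have L: "lin (*) mu" using I by (auto simp: integ_def)
  have ma [simp]: "mu (a + b) = mu a + mu b" "mu (smult c a) = c * mu a" for a b c
    using L by (auto simp: lin_def)
  have z [simp]: "mu 0 = 0" using ma(2)[of 0 0] by simp
  have one_eq: "Sw tt (\<lambda>a b. mult (S a) b) = one"
    using Sw_antiL[OF Mod, of "\<lambda>x. x" tt] by (simp add: lin_def)
  have "mu y = mu (mult y (Sw tt (\<lambda>a b. mult (S a) b)))" by (simp add: one_eq)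
  also have "\<dots> = Sw tt (\<lambda>a b. mu (mult y (mult (S a) b)))"
    by (rule Sw_lin_out) simp_all
  also have "\<dots> = Sw tt (\<lambda>a b. \<Sum>j<n. fb j a * mu (mult (mult y (S (hb j))) b))"
  proof -
    have "\<And>a b. mu (mult (mult y (S a)) b) = (\<Sum>j<n. fb j a * mu (mult (mult y (S (hb j))) b))"
      by (rule lin_dual[OF module_times]) (simp add: lin_def algebra_simps)
    note loc = this
    show ?thesis by (rule Sw_cong, subst m_assoc[symmetric], rule loc)
  qed
  also have "\<dots> = (\<Sum>j<n. fb j (Sw tt (\<lambda>a b. smult (mu (mult (mult y (S (hb j))) b)) a)))"
  proof -
    have "\<And>j. fb j (Sw tt (\<lambda>a b. smult (mu (mult (mult y (S (hb j))) b)) a))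
        = Sw tt (\<lambda>a b. fb j a * mu (mult (mult y (S (hb j))) b))"
      by (simp add: Sw_fb_out mult.commute)
    note loc = this
    show ?thesis by (simp only: loc Sw_Bsum)
  qed
  also have "\<dots> = (\<Sum>j<n. fb j (smult (mu tt) (S (mult y (S (hb j))))))"
    by (simp only: C_lemma[OF I])
  also have "\<dots> = mu tt * Psi y"
    by (simp add: Psi_def sum_distrib_left)
  finally show ?thesis .
qed

lemma phi_Psi: "phi y = Psi y"
  using uniq0[OF integ_phi, of y] by (simp add: phi_t)

lemma uniq: "integ mu \<Longrightarrow> mu y = mu tt * phi y"
  using uniq0[of mu y] phi_Psi[of y] by simp

end



context hfull
begin

lemma phi_zero [simp]: "phi 0 = 0" using phi_smult[of 0 0] by simp

lemma Sw_smult_out_left: "smult (Sw w F) a = Sw w (\<lambda>c d. smult (F c d) a)"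
  by (rule Sw_lin_out) simp_all

lemma nu_integ:
  assumes G: "lin (*) g"
  shows "integ (\<lambda>x. Sw x (\<lambda>a b. phi a * g b))"
proof -
  have ga [simp]: "g (a + b) = g a + g b" "g (smult c a) = c * g a" for a b c
    using G by (auto simp: lin_def)
  have "Sw z (\<lambda>a b. smult (Sw b (\<lambda>c d. phi c * g d)) a) = smult (Sw z (\<lambda>a b. phi a * g b)) one" for z
  proof -
    have "Sw z (\<lambda>a b. smult (Sw b (\<lambda>c d. phi c * g d)) a) = Sw z (\<lambda>a b. Sw b (\<lambda>c d. smult (phi c * g d) a))"
      by (simp only: Sw_smult_out_left)
    also have "\<dots> = Sw z (\<lambda>a b. Sw a (\<lambda>c d. smult (phi d * g b) c))"
      by (rule Sw_coassoc[OF Mod, symmetric]) (simp add: lsimp)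
    also have "\<dots> = Sw z (\<lambda>a b. smult (g b) (Sw a (\<lambda>c d. smult (phi d) c)))"
      by (simp add: Sw_Bscale_h[symmetric] mult.commute)
    also have "\<dots> = Sw z (\<lambda>a b. smult (phi a * g b) one)"
      by (simp add: integral_H mult.commute)
    also have "\<dots> = smult (Sw z (\<lambda>a b. phi a * g b)) one"
      by (simp only: Sw_smult_out_left)
    finally show ?thesis .
  qed
  moreover have "lin (*) (\<lambda>x. Sw x (\<lambda>a b. phi a * g b))"
    by (simp add: lsimp)
  ultimately show ?thesis by (simp add: integ_def)
qed

definition ael :: 'h where "ael = Sw tt (\<lambda>a b. smult (phi a) b)"

lemma D_ael: "Sw y (\<lambda>a b. smult (phi a) b) = smult (phi y) ael"
proof (rule ext_fb)
  fix j
  have "fb j (Sw y (\<lambda>a b. smult (phi a) b)) = Sw y (\<lambda>a b. phi a * fb j b)"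
    by (simp add: Sw_fb_out)
  also have "\<dots> = Sw tt (\<lambda>a b. phi a * fb j b) * phi y"
    by (rule uniq[OF nu_integ[OF fb_lin]])
  also have "\<dots> = fb j (smult (phi y) ael)"
    by (simp add: ael_def Sw_fb_out mult.commute)
  finally show "fb j (Sw y (\<lambda>a b. smult (phi a) b)) = fb j (smult (phi y) ael)" .
qed

lemma eps_ael: "eps ael = 1"
proof -
  have "eps ael = Sw tt (\<lambda>a b. eps b * phi a)"
    unfolding ael_def by (subst Sw_lin_out[where psi=eps]) (simp_all add: mult.commute)
  also have "\<dots> = phi tt" by (rule Sw_counitR[OF module_times phi_lin])
  finally show ?thesis by (simp add: phi_t)
qed

lemma ael_grp:
  assumes B: "bil smult B"
  shows "Sw ael B = B ael ael"
proof -
  note bd = bilD[OF B]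
  have "Sw ael B = Sw tt (\<lambda>a b. Sw (smult (phi a) b) B)"
    unfolding ael_def by (rule Sw_lin_out) (use bd in \<open>simp_all add: lsimp Sw_zero_h[OF B]\<close>)
  also have "\<dots> = Sw tt (\<lambda>a b. Sw b (\<lambda>c d. smult (phi a) (B c d)))"
    by (simp only: Sw_smult_h[OF B] Sw_Bscale_h)
  also have "\<dots> = Sw tt (\<lambda>a b. Sw a (\<lambda>c d. smult (phi c) (B d b)))"
    by (rule Sw_coassoc[OF Mod, symmetric]) (use bd in \<open>simp add: lsimp\<close>)
  also have "\<dots> = Sw tt (\<lambda>a b. B (Sw a (\<lambda>c d. smult (phi c) d)) b)"
  proof -
    have "B (Sw a (\<lambda>c d. smult (phi c) d)) b = Sw a (\<lambda>c d. smult (phi c) (B d b))" for a b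
    proof -
      have "B 0 b = 0" using bd(3)[of 0 0 b] by simp
      then show ?thesis by (subst Sw_lin_out[where psi="\<lambda>z. B z b"]) (use bd in \<open>simp_all add: lsimp\<close>)
    qed
    then show ?thesis by (simp only:)
  qed
  also have "\<dots> = Sw tt (\<lambda>a b. smult (phi a) (B ael b))"
    by (simp add: D_ael bd)
  also have "\<dots> = B ael (Sw tt (\<lambda>a b. smult (phi a) b))"
  proof -
    have "B ael 0 = 0" using bd(4)[of ael 0 0] by simp
    then show ?thesis by (subst Sw_lin_out[where psi="B ael"]) (use bd in \<open>simp_all add: lsimp\<close>)
  qed
  also have "\<dots> = B ael ael" by (simp only: ael_def)
  finally show ?thesis .
qed

lemma ael_inv: "mult ael (S ael) = one"
proof -
  have "Sw ael (\<lambda>a b. mult a (S b)) = smult (eps ael) one"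
    using Sw_antiR[OF Mod, of "\<lambda>x. x" ael] by (simp add: lin_def)
  moreover have "Sw ael (\<lambda>a b. mult a (S b)) = mult ael (S ael)"
    by (rule ael_grp) (simp add: lsimp)
  ultimately show ?thesis by (simp add: eps_ael)
qed

lemma T1:
  assumes B: "bil smult B"
  shows "Sw tt (\<lambda>c d. B c (mult a d)) = Sw tt (\<lambda>c d. B (mult (S a) c) d)"
proof -
  note bd = bilD[OF B]
  have X: "B c (mult a d) = Sw a (\<lambda>p0 p1. Sw p1 (\<lambda>q0 q1. B (mult (mult (S p0) q0) c) (mult q1 d)))" for c d
  proof -
    have "Sw a (\<lambda>p0 p1. Sw p1 (\<lambda>q0 q1. B (mult (mult (S p0) q0) c) (mult q1 d)))
        = Sw a (\<lambda>x y. Sw x (\<lambda>q0 q1. B (mult (mult (S q0) q1) c) (mult y d)))"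
      by (rule Sw_coassoc[OF Mod, symmetric]) (use bd in \<open>simp add: lsimp\<close>)
    also have "\<dots> = Sw a (\<lambda>x y. smult (eps x) (B (mult one c) (mult y d)))"
    proof -
      have "\<And>x y. Sw x (\<lambda>q0 q1. B (mult (mult (S q0) q1) c) (mult y d)) = smult (eps x) (B (mult one c) (mult y d))"
        by (rule Sw_antiL[OF Mod]) (use bd in \<open>simp add: lsimp\<close>)
      then show ?thesis by (simp only:)
    qed
    also have "\<dots> = B c (mult a d)"
      by (simp only: m_one_left, rule Sw_counitL[OF Mod]) (use bd in \<open>simp add: lsimp\<close>)
    finally show ?thesis by simp
  qed
  have "Sw tt (\<lambda>c d. B c (mult a d)) = Sw tt (\<lambda>c d. Sw a (\<lambda>p0 p1. Sw p1 (\<lambda>q0 q1. B (mult (mult (S p0) q0) c) (mult q1 d))))"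
    by (rule Sw_cong, rule X)
  also have "\<dots> = Sw a (\<lambda>p0 p1. Sw tt (\<lambda>c d. Sw p1 (\<lambda>q0 q1. B (mult (mult (S p0) q0) c) (mult q1 d))))"
    by (rule Sw_swap)
  also have "\<dots> = Sw a (\<lambda>p0 p1. Sw p1 (\<lambda>q0 q1. Sw tt (\<lambda>c d. B (mult (S p0) (mult q0 c)) (mult q1 d))))"
    by (simp only: m_assoc, rule Sw_cong, rule Sw_swap)
  also have "\<dots> = Sw a (\<lambda>p0 p1. Sw (mult p1 tt) (\<lambda>u v. B (mult (S p0) u) v))"
  proof -
    have "\<And>p0 p1. Sw (mult p1 tt) (\<lambda>u v. B (mult (S p0) u) v) = Sw p1 (\<lambda>q0 q1. Sw tt (\<lambda>c d. B (mult (S p0) (mult q0 c)) (mult q1 d)))"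
      by (rule Sw_mult[OF Mod]) (use bd in \<open>simp add: lsimp\<close>)
    then show ?thesis by (simp only:)
  qed
  also have "\<dots> = Sw a (\<lambda>p0 p1. smult (eps p1) (Sw tt (\<lambda>u v. B (mult (S p0) u) v)))"
  proof -
    have "\<And>p0 p1. Sw (mult p1 tt) (\<lambda>u v. B (mult (S p0) u) v) = smult (eps p1) (Sw tt (\<lambda>u v. B (mult (S p0) u) v))"
      by (simp only: t_left, rule Sw_smult_h) (use bd in \<open>simp add: lsimp\<close>)
    then show ?thesis by (simp only:)
  qed
  also have "\<dots> = Sw tt (\<lambda>u v. B (mult (S a) u) v)"
    by (rule Sw_counitR[OF Mod]) (use bd in \<open>simp add: lsimp\<close>)
  finally show ?thesis .
qed

definition Tinv :: "'h \<Rightarrow> 'h" where "Tinv z = Sw tt (\<lambda>a b. smult (phi (mult z a)) b)"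

lemma T_S: "Tinv (S x) = mult x ael"
proof -
  have "Sw tt (\<lambda>c d. smult (phi c) (mult x d)) = Sw tt (\<lambda>c d. smult (phi (mult (S x) c)) d)"
    by (rule T1) (simp add: lsimp)
  then show ?thesis by (simp add: Tinv_def ael_def Sw_mult_out)
qed

lemma S_inj: assumes "S x = S y" shows "x = y"
proof -
  have "x = mult (Tinv (S x)) (S ael)" by (simp add: T_S m_assoc ael_inv)
  also have "\<dots> = mult (Tinv (S y)) (S ael)" by (simp add: assms)
  also have "\<dots> = y" by (simp add: T_S m_assoc ael_inv)
  finally show ?thesis .
qed

definition Sinv :: "'h \<Rightarrow> 'h" where "Sinv h = Sw tt (\<lambda>v0 v1. smult (phi (mult v1 h)) v0)"

lemma Sinv_add [simp]: "Sinv (x + y) = Sinv x + Sinv y"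
  by (simp add: Sinv_def Sw_Badd[symmetric] algebra_simps)
lemma Sinv_smult [simp]: "Sinv (smult c x) = smult c (Sinv x)"
  by (simp add: Sinv_def Sw_Bscale_h[symmetric])

lemma Sinv_zero [simp]: "Sinv 0 = 0" using Sinv_smult[of 0 0] by simp

lemma S_Sinv: "S (Sinv h) = h"
proof -
  have "S (Sinv h) = Sw tt (\<lambda>v0 v1. smult (phi (mult v1 h)) (S v0))"
    unfolding Sinv_def by (subst Sw_lin_out[where psi=S]) simp_all
  also have "\<dots> = smult (phi tt) h" by (rule B_lemma[OF integ_phi, symmetric])
  finally show ?thesis by (simp add: phi_t)
qed

lemma Sinv_S: "Sinv (S x) = x"
  by (rule S_inj) (simp add: S_Sinv)

lemma phi_frob: "frobenius_hom smult mult phi"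
proof -
  let ?Th = "\<lambda>h. (\<lambda>x. phi (mult x h))"
  have key: "h = Sw tt (\<lambda>v0 v1. smult (?Th h v1) (S v0))" for h
    using B_lemma[OF integ_phi, of h] by (simp add: phi_t)
  have inj: "inj_on ?Th UNIV"
  proof (rule inj_onI)
    fix h1 h2 assume eq: "?Th h1 = ?Th h2"
    have e: "phi (mult v h1) = phi (mult v h2)" for v using fun_cong[OF eq, of v] by simp
    have "h1 = Sw tt (\<lambda>v0 v1. smult (phi (mult v1 h1)) (S v0))" by (rule key)
    also have "\<dots> = Sw tt (\<lambda>v0 v1. smult (phi (mult v1 h2)) (S v0))" by (simp only: e)
    also have "\<dots> = h2" by (rule key[symmetric])
    finally show "h1 = h2" .
  qed
  have img: "?Th ` UNIV = {f. lin_fun smult f}"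
  proof
    show "?Th ` UNIV \<subseteq> {f. lin_fun smult f}"
      by (auto simp: lin_fun_def)
  next
    show "{f. lin_fun smult f} \<subseteq> ?Th ` UNIV"
    proof
      fix f assume "f \<in> {f. lin_fun smult f}"
      then have fa [simp]: "f (a + b) = f a + f b" "f (smult c a) = c * f a" for a b c
        by (auto simp: lin_fun_def)
      have f0 [simp]: "f 0 = 0" using fa(2)[of 0 0] by simp
      let ?h = "Sw tt (\<lambda>a b. smult (f (Sinv a)) b)"
      have "?Th ?h x = f x" for x
      proof -
        have "?Th ?h x = Sw tt (\<lambda>a b. phi (mult x (smult (f (Sinv a)) b)))"
          by (subst Sw_lin_out[where psi="\<lambda>z. phi (mult x z)"]) simp_all
        also have "\<dots> = Sw tt (\<lambda>a b. f (Sinv (smult (phi (mult x b)) a)))"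
          by (simp add: mult.commute)
        also have "\<dots> = f (Sinv (Sw tt (\<lambda>a b. smult (phi (mult x b)) a)))"
          by (rule Sw_lin_out[symmetric]) simp_all
        also have "\<dots> = f x" by (simp add: C_lemma[OF integ_phi] phi_t Sinv_S)
        finally show ?thesis .
      qed
      then have "f = ?Th ?h" by auto
      then show "f \<in> ?Th ` UNIV" by blast
    qed
  qed
  show ?thesis unfolding frobenius_hom_def bij_betw_def
    using inj img phi_lin_fun by blast
qed

lemma phi_left_int: "left_integral_dual smult one Delta phi"
proof -
  have "sum_list (map (\<lambda>t. g (t!0) * phi (t!1)) (Delta x)) = g one * phi x" if g: "lin_fun smult g" for g x
  proof -
    have ga [simp]: "g (a + b) = g a + g b" "g (smult c a) = c * g a" for a b c
      using g by (auto simp: lin_fun_def)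
    have g0 [simp]: "g 0 = 0" using ga(2)[of 0 0] by simp
    have "sum_list (map (\<lambda>t. g (t!0) * phi (t!1)) (Delta x)) = Sw x (\<lambda>a b. g (smult (phi b) a))"
      by (simp add: Sw_def mult.commute)
    also have "\<dots> = g (Sw x (\<lambda>a b. smult (phi b) a))"
      by (rule Sw_lin_out[symmetric]) simp_all
    also have "\<dots> = g one * phi x" by (simp add: integral_H mult.commute)
    finally show ?thesis .
  qed
  then show ?thesis by (simp add: left_integral_dual_def phi_lin_fun)
qed

lemma fgp: "fg_projective smult"
  unfolding fg_projective_def
  by (rule exI[of _ n], rule exI[of _ ii], rule exI[of _ pp]) (simp add: ii_add ii_sm ii_supp pp_add pp_sm pp_ii)

lemma FH: "FH_algebra smult mult one Delta"
  unfolding FH_algebra_def frobenius_algebra_def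
  using alg fgp phi_frob phi_left_int by blast

end


theorem corollary6p3:
  fixes smult :: "'k::comm_ring_1 \<Rightarrow> 'h::ab_group_add \<Rightarrow> 'h"
    and mult :: "'h \<Rightarrow> 'h \<Rightarrow> 'h" and one :: 'h
    and Delta :: "'h \<Rightarrow> 'h list list" and eps :: "'h \<Rightarrow> 'k" and S :: "'h \<Rightarrow> 'h"
  assumes "module smult"
    and "hopf_algebra smult mult one Delta eps S"
    and "fg_projective smult"
    and "separable_algebra smult mult one"
  shows "FH_algebra smult mult one Delta"
proof -
  obtain n :: nat and i :: "'h \<Rightarrow> nat \<Rightarrow> 'k" and p :: "(nat \<Rightarrow> 'k) \<Rightarrow> 'h" where
    ip: "(\<forall>x y. i (x + y) = i x + i y)" "(\<forall>c x. i (smult c x) = (\<lambda>j. c * i x j))"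
       "(\<forall>x j. n \<le> j \<longrightarrow> i x j = 0)"
       "(\<forall>u v. p (u + v) = p u + p v)" "(\<forall>c u. p (\<lambda>j. c * u j) = smult c (p u))"
       "(\<forall>x. p (i x) = x)"
    using assms(3) unfolding fg_projective_def by blast
  obtain e where e: "sum_list (map (\<lambda>t. mult (t!0) (t!1)) e) = one"
     "\<forall>a. tens_eq smult 2 (map (\<lambda>t. [mult a (t!0), t!1]) e) (map (\<lambda>t. [t!0, mult (t!1) a]) e)"
    using assms(4) unfolding separable_algebra_def by blast
  have hf: "hfull smult mult one Delta eps S n i p e"
    unfolding hfull_def hfull_axioms_def hctx_def using assms(1,2) ip e by auto
  interpret H: hfull smult mult one Delta eps S n i p e by (rule hf)
  show ?thesis by (rule H.FH)
qed

end
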